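(* Let $F$ be a non-empty union-closed family and $F_c\subseteq F$. Let $S=\bigcup F_c$ and $K=\bigcup F\setminus\bigcup F_c$. Let $w$ be a function from elements to $\mathbb{N}$ with $w(a)>0$ for some $a\in\bigcup F$ and $w(x)=0$ for all $x\in K$. If $\mathrm{fs}(F',w,\bigcup F_c)\ge 0$ for every $F'\in\mathrm{uce}(F_c)$, then $F$ is Frankl's.
   Context: All sets and families are finite. A family $F$ is union closed if $A\cup B\in F$ for all $A,B\in F$; it is union closed for $F_c$ if it is union closed and $A\cup B\in F$ for all $A\in F$, $B\in F_c$. $\mathrm{uce}(F_c)=\{F' : F'\subseteq\mathcal{P}(\bigcup F_c),\ F' \text{ union closed for } F_c\}$. $F$ is Frankl's if there is $a \in \bigcup F$ with $2\cdot|\{A\in F: a\in A\}| \ge |F|$. $\mathrm{sw}(w,A)=\sum_{a\in A}w(a)$; $\mathrm{ss}(A,w,X)=2\,\mathrm{sw}(w,A)-\mathrm{sw}(w,X)\in\mathbb{Z}$; $\mathrm{fs}(F,w,X)=\sum_{A\in F}\mathrm{ss}(A,w,X)$. *)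

theory Defs
  imports Main
begin

definition union_closed :: "'a set set \<Rightarrow> bool" where
  "union_closed F \<longleftrightarrow> (\<forall>A\<in>F. \<forall>B\<in>F. A \<union> B \<in> F)"

definition union_closed_for :: "'a set set \<Rightarrow> 'a set set \<Rightarrow> bool" where
  "union_closed_for F Fc \<longleftrightarrow> union_closed F \<and> (\<forall>A\<in>F. \<forall>B\<in>Fc. A \<union> B \<in> F)"

definition uce :: "'a set set \<Rightarrow> 'a set set set" where
  "uce Fc = {F'. F' \<subseteq> Pow (\<Union>Fc) \<and> union_closed_for F' Fc}"

definition frankls :: "'a set set \<Rightarrow> bool" where
  "frankls F \<longleftrightarrow> (\<exists>a\<in>\<Union>F. 2 * card {A\<in>F. a \<in> A} \<ge> card F)"

definition sw :: "('a \<Rightarrow> nat) \<Rightarrow> 'a set \<Rightarrow> nat" where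
  "sw w A = (\<Sum>a\<in>A. w a)"

definition ss :: "'a set \<Rightarrow> ('a \<Rightarrow> nat) \<Rightarrow> 'a set \<Rightarrow> int" where
  "ss A w X = 2 * int (sw w A) - int (sw w X)"

definition fs :: "'a set set \<Rightarrow> ('a \<Rightarrow> nat) \<Rightarrow> 'a set \<Rightarrow> int" where
  "fs F w X = (\<Sum>A\<in>F. ss A w X)"

end

theory Submission
  imports Defs
begin

theorem lemma4:
  fixes F Fc :: "'a set set" and w :: "'a \<Rightarrow> nat"
  assumes "finite F" and "\<forall>A\<in>F. finite A"
    and "F \<noteq> {}" and "union_closed F"
    and "Fc \<subseteq> F"
    and "\<exists>a\<in>\<Union>F. w a > 0"
    and "\<forall>x\<in>\<Union>F - \<Union>Fc. w x = 0"
    and "\<forall>F'\<in>uce Fc. fs F' w (\<Union>Fc) \<ge> 0"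
  shows "frankls F"
proof -
  define S where "S = \<Union>Fc"
  define K where "K = \<Union>F - S"
  have finS: "finite S" unfolding S_def using assms(1,2,5) by (meson finite_Union rev_finite_subset subsetD)
  have swA: "sw w A = sw w (A \<inter> S)" if "A \<in> F" for A
  proof -
    have "finite A" using assms(2) that by blast
    moreover have "\<forall>x\<in>A - A \<inter> S. w x = 0" using assms(7) that unfolding S_def by blast
    ultimately show ?thesis unfolding sw_def
      by (metis (no_types, lifting) Int_lower1 sum.mono_neutral_right)
  qed
  define G where "G B = (\<lambda>A. A \<inter> S) ` {A\<in>F. A \<inter> K = B}" for B
  have Guce: "G B \<in> uce Fc" for B
  proof -
    have "G B \<subseteq> Pow (\<Union>Fc)" unfolding G_def S_def by auto
    moreover have "union_closed (G B)" unfolding union_closed_def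
    proof (intro ballI)
      fix X Y assume "X \<in> G B" "Y \<in> G B"
      then obtain A1 A2 where "A1 \<in> F" "A1 \<inter> K = B" "X = A1 \<inter> S" "A2 \<in> F" "A2 \<inter> K = B" "Y = A2 \<inter> S"
        unfolding G_def by auto
      moreover have "A1 \<union> A2 \<in> F" using assms(4) calculation unfolding union_closed_def by blast
      ultimately show "X \<union> Y \<in> G B" unfolding G_def by (auto intro!: image_eqI[where x="A1 \<union> A2"])
    qed
    moreover have "\<forall>X\<in>G B. \<forall>C\<in>Fc. X \<union> C \<in> G B"
    proof (intro ballI)
      fix X C assume "X \<in> G B" "C \<in> Fc"
      then obtain A1 where A1: "A1 \<in> F" "A1 \<inter> K = B" "X = A1 \<inter> S"
        unfolding G_def by auto
      have CS: "C \<subseteq> S" using \<open>C \<in> Fc\<close> unfolding S_def by blast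
      have "A1 \<union> C \<in> F" using assms(4,5) A1 \<open>C \<in> Fc\<close> unfolding union_closed_def by blast
      moreover have "(A1 \<union> C) \<inter> K = B" using A1 CS unfolding K_def by blast
      moreover have "X \<union> C = (A1 \<union> C) \<inter> S" using A1 CS by blast
      ultimately show "X \<union> C \<in> G B" unfolding G_def by blast
    qed
    ultimately show ?thesis unfolding uce_def union_closed_for_def by blast
  qed
  have fsS: "fs F w S = (\<Sum>A\<in>F. ss (A \<inter> S) w S)"
    unfolding fs_def ss_def using swA by simp
  also have "\<dots> = (\<Sum>B\<in>(\<lambda>A. A \<inter> K) ` F. \<Sum>A\<in>{A\<in>F. A \<inter> K = B}. ss (A \<inter> S) w S)"
    using sum.group[of F "(\<lambda>A. A \<inter> K) ` F" "\<lambda>A. A \<inter> K" "\<lambda>A. ss (A \<inter> S) w S"] assms(1) by simp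
  also have "\<dots> = (\<Sum>B\<in>(\<lambda>A. A \<inter> K) ` F. fs (G B) w S)"
  proof (rule sum.cong[OF refl])
    fix B
    have "inj_on (\<lambda>A. A \<inter> S) {A\<in>F. A \<inter> K = B}"
    proof (rule inj_onI)
      fix A1 A2 assume "A1 \<in> {A\<in>F. A \<inter> K = B}" "A2 \<in> {A\<in>F. A \<inter> K = B}" "A1 \<inter> S = A2 \<inter> S"
      moreover have "A1 \<subseteq> S \<union> K" "A2 \<subseteq> S \<union> K" using calculation unfolding K_def by auto
      ultimately show "A1 = A2" by blast
    qed
    then show "(\<Sum>A\<in>{A\<in>F. A \<inter> K = B}. ss (A \<inter> S) w S) = fs (G B) w S"
      unfolding fs_def G_def by (simp add: sum.reindex)
  qed
  also have "\<dots> \<ge> 0" using Guce assms(8) unfolding S_def by (simp add: sum_nonneg)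
  finally have nonneg: "fs F w S \<ge> 0" .
  define c where "c a = 2 * int (card {A\<in>F. a \<in> A}) - int (card F)" for a
  have sseq: "ss (A \<inter> S) w S = (\<Sum>a\<in>S. int (w a) * (2 * (if a \<in> A then 1 else 0) - 1))" for A
  proof -
    have "sw w (A \<inter> S) = (\<Sum>a\<in>S. if a \<in> A then w a else 0)"
      unfolding sw_def using sum.inter_restrict[OF finS, of w A] by (simp add: Int_commute)
    then have "ss (A \<inter> S) w S = 2 * (\<Sum>a\<in>S. int (if a \<in> A then w a else 0)) - (\<Sum>a\<in>S. int (w a))"
      unfolding ss_def sw_def by (simp add: of_nat_sum)
    also have "\<dots> = (\<Sum>a\<in>S. 2 * int (if a \<in> A then w a else 0) - int (w a))"
      by (simp add: sum_distrib_left sum_subtractf)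
    also have "\<dots> = (\<Sum>a\<in>S. int (w a) * (2 * (if a \<in> A then 1 else 0) - 1))"
      by (rule sum.cong) auto
    finally show ?thesis .
  qed
  have "fs F w S = (\<Sum>A\<in>F. \<Sum>a\<in>S. int (w a) * (2 * (if a \<in> A then 1 else 0) - 1))"
    unfolding fsS using sseq by simp
  also have "\<dots> = (\<Sum>a\<in>S. \<Sum>A\<in>F. int (w a) * (2 * (if a \<in> A then 1 else 0) - 1))"
    by (rule sum.swap)
  also have "\<dots> = (\<Sum>a\<in>S. int (w a) * c a)"
  proof (rule sum.cong[OF refl])
    fix a
    have "(\<Sum>A\<in>F. (if a \<in> A then 1 else 0)::int) = int (card {A\<in>F. a \<in> A})"
      using sum.inter_filter[OF assms(1), of "\<lambda>_. 1::int" "\<lambda>A. a \<in> A"] by simp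
    then show "(\<Sum>A\<in>F. int (w a) * (2 * (if a \<in> A then 1 else 0) - 1)) = int (w a) * c a"
      unfolding c_def by (simp add: sum_distrib_left[symmetric] sum_subtractf algebra_simps sum_distrib_left[of 2, symmetric])
  qed
  finally have tot: "(\<Sum>a\<in>S. int (w a) * c a) \<ge> 0" using nonneg by simp
  obtain a0 where a0: "a0 \<in> \<Union>F" "w a0 > 0" using assms(6) by blast
  have a0S: "a0 \<in> S" using a0 assms(7) unfolding S_def by (metis DiffI UnionI less_numeral_extra(3))
  show ?thesis
  proof (rule ccontr)
    assume nf: "\<not> frankls F"
    have neg: "c a < 0" if "a \<in> S" for a
    proof -
      have "a \<in> \<Union>F" using that assms(5) unfolding S_def by blast
      then show ?thesis using nf unfolding frankls_def c_def by force
    qed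
    have "(\<Sum>a\<in>S. int (w a) * c a) = int (w a0) * c a0 + (\<Sum>a\<in>S - {a0}. int (w a) * c a)"
      using sum.remove[OF finS a0S] by simp
    also have "\<dots> < 0"
    proof -
      have "int (w a0) * c a0 < 0" using a0 neg[OF a0S] by (simp add: mult_pos_neg)
      moreover have "(\<Sum>a\<in>S - {a0}. int (w a) * c a) \<le> 0"
        using neg by (intro sum_nonpos) (simp add: mult_nonneg_nonpos less_imp_le)
      ultimately show ?thesis by simp
    qed
    finally show False using tot by simp
  qed
qed

end
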